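(* Let $a,b$ be polynomials with $a(0)\ne0$, $b(0)\ne0$, and $a(z)a^*(z)=b(z)b^*(z)$ for infinitely many $z\in\mathbb C^*$. Then $a$ and $b$ have the same degree $m$. Let $C_a,C_b$ be their leading coefficients, $\mathcal R_a=\{\alpha_1,\dots,\alpha_m\}$, $\mathcal R_b=\{\beta_1,\dots,\beta_m\}$ the multisets of their zeros, $\mathcal R_{ab}$ the multiset of common zeros, $\overline{\mathcal R}_a:=\mathcal R_a\setminus\mathcal R_{ab}$, $\overline{\mathcal R}_b:=\mathcal R_b\setminus\mathcal R_{ab}$. Then: (a) the multisets $\{\alpha_1,\dots,\alpha_m,1/\overline{\alpha_1},\dots,1/\overline{\alpha_m}\}$ and $\{\beta_1,\dots,\beta_m,1/\overline{\beta_1},\dots,1/\overline{\beta_m}\}$ are equal; (b) $\mathcal R_a,\mathcal R_b,\mathcal R_{ab}$ have the same multiplicity for each zero on the unit circle $\mathbb T$, and $\overline{\mathcal R}_a,\overline{\mathcal R}_b$ contain no element of $\mathbb T$; (c) if $y\in\overline{\mathcal R}_a$ with multiplicity $k$, then $y\notin\overline{\mathcal R}_b$, $1/\overline y\notin\overline{\mathcal R}_a$, and $1/\overline y\in\overline{\mathcal R}_b$ with multiplicity $k$ (and symmetrically with $a,b$ exchanged); (d) $|\overline{\mathcal R}_a|=|\overline{\mathcal R}_b|$ and $\prod_{y\in\overline{\mathcal R}_a}y=\prod_{y\in\overline{\mathcal R}_b}1/\overline y$; (e) $C_b=\lambda C_a\big|\prod_{y\in\overline{\mathcal R}_a}y\big|$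 for some $\lambda\in\mathbb T$; (f) for a fixed polynomial $a$ with $a(0)\ne0$, the number of polynomials $b$ satisfying the hypotheses together with $b(0)\in\mathbb R$, $b(0)>0$ (respectively $b(0)<0$) equals $\mathcal N(R)$, where $R:=\{\alpha_1,\dots,\alpha_m,1/\overline{\alpha_1},\dots,1/\overline{\alpha_m}\}$.
   Context: $\mathbb T$ is the unit circle, $\mathbb C^*=\mathbb C\setminus\{0\}$, and for a Laurent polynomial $a$, $a^*(z):=\overline{a(1/\overline z)}$. Multisets: $B\subseteq A$ means each multiplicity in $B$ is at most that in $A$, and $A\setminus B$ is the unique multiset with $(A\setminus B)\cup B=A$. Counting function: for a finite multiset $R\subset\mathbb C^*$, define the equivalence relation $\alpha\sim\beta$ iff $\alpha=\beta$ or $\alpha=1/\overline\beta$, and suppose every equivalence class (counted as a multiset) has even size. For a class $y$, set $\sharp(y):=1$ if $y$ meets $\mathbb T$ and $\sharp(y):=1+|y|/2$ otherwise; then $\mathcal N(R):=\prod_{y\in R/\sim}\sharp(y)$. *)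

theory Defs
  imports "HOL-Analysis.Analysis" "HOL-Computational_Algebra.Fundamental_Theorem_Algebra"
begin

definition refl_T :: "complex \<Rightarrow> complex" where
  "refl_T z = 1 / cnj z"

definition star_eval :: "complex poly \<Rightarrow> complex \<Rightarrow> complex" where
  "star_eval a z = cnj (poly a (1 / cnj z))"

definition same_modsq :: "complex poly \<Rightarrow> complex poly \<Rightarrow> bool" where
  "same_modsq a b \<longleftrightarrow>
     infinite {z. z \<noteq> 0 \<and> poly a z * star_eval a z = poly b z * star_eval b z}"

definition eq_class :: "complex multiset \<Rightarrow> complex \<Rightarrow> complex multiset" where
  "eq_class R \<alpha> = filter_mset (\<lambda>\<beta>. \<beta> = \<alpha> \<or> \<beta> = refl_T \<alpha>) R"

definition classes :: "complex multiset \<Rightarrow> complex multiset set" where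
  "classes R = eq_class R ` set_mset R"

definition sharp :: "complex multiset \<Rightarrow> nat" where
  "sharp y = (if \<exists>z\<in>#y. norm z = 1 then 1 else 1 + size y div 2)"

definition count_N :: "complex multiset \<Rightarrow> nat" where
  "count_N R = (\<Prod>y\<in>classes R. sharp y)"

end

theory Submission
  imports Defs
begin


lemma refl_T_refl_T [simp]: "refl_T (refl_T z) = z"
  by (simp add: refl_T_def)

lemma refl_T_eq_0_iff [simp]: "refl_T z = 0 \<longleftrightarrow> z = 0"
  by (simp add: refl_T_def)

lemma inj_refl_T: "inj refl_T"
  by (metis injI refl_T_refl_T)

lemma refl_T_circle: "norm z = 1 \<Longrightarrow> refl_T z = z"
proof -
  assume "norm z = 1"
  hence "z * cnj z = 1" by (metis complex_norm_square mult.commute of_real_1 power_one)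
  thus ?thesis unfolding refl_T_def by (metis divide_eq_eq mult.commute mult_cancel_right1 mult_zero_left zero_neq_one)
qed

lemma norm_refl_T: "norm (refl_T z) = 1 / norm z"
  by (simp add: refl_T_def norm_divide)

lemma refl_T_mult: "refl_T (x * y) = refl_T x * refl_T y"
  by (simp add: refl_T_def)

lemma count_image_refl: "count (image_mset refl_T M) x = count M (refl_T x)"
proof (induction M)
  case (add a M)
  show ?case
  proof (cases "x = refl_T a")
    case True
    thus ?thesis using add by simp
  next
    case False
    hence "refl_T x \<noteq> a" by (metis refl_T_refl_T)
    thus ?thesis using add False by simp
  qed
qed simp

lemma prod_image_refl: "prod_mset (image_mset refl_T M) = refl_T (prod_mset M)"
  by (induction M) (auto simp: refl_T_mult refl_T_def)

lemma image_refl_refl [simp]: "image_mset refl_T (image_mset refl_T M) = M"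
  by (simp add: multiset.map_comp comp_def)

definition PP :: "complex multiset \<Rightarrow> complex poly" where
  "PP S = (\<Prod>x\<in>#S. [:-x, 1:])"

lemma PP_add: "PP (add_mset s S) = [:-s,1:] * PP S"
  by (simp add: PP_def)

lemma PP_empty [simp]: "PP {#} = 1"
  by (simp add: PP_def)

lemma PP_nz [simp]: "PP S \<noteq> 0"
  by (induction S) (simp_all add: PP_add del: mult_pCons_left)

lemma proots_PP [simp]: "proots (PP S) = S"
proof (induction S)
  case (add x S)
  have "proots [:-x,1:] = {#x#}" using proots_linear_factor[of "-x"] by simp
  thus ?case using add by (simp add: proots_mult PP_add del: mult_pCons_left)
qed simp

lemma degree_PP [simp]: "degree (PP S) = size S"
  by (induction S) (simp_all add: degree_mult_eq PP_add del: mult_pCons_left)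

lemma lead_PP [simp]: "lead_coeff (PP S) = 1"
  by (induction S) (simp_all add: lead_coeff_mult PP_add del: mult_pCons_left)

lemma poly_PP_0: "poly (PP S) 0 = (-1) ^ size S * prod_mset S"
  by (induction S) (simp_all add: PP_add del: mult_pCons_left)

definition cstar :: "complex poly \<Rightarrow> complex poly" where
  "cstar p = reflect_poly (map_poly cnj p)"

lemma map_poly_cnj_mult: "map_poly cnj (p * q) = map_poly cnj p * map_poly cnj q"
  by (rule poly_eq_poly_eq_iff[THEN iffD1]) (auto simp: fun_eq_iff)

lemma map_poly_cnj_smult: "map_poly cnj (smult c p) = smult (cnj c) (map_poly cnj p)"
  by (rule map_poly_smult) auto

lemma cstar_mult: "cstar (p * q) = cstar p * cstar q"
  by (simp add: cstar_def map_poly_cnj_mult reflect_poly_mult)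

lemma cstar_smult: "cstar (smult c p) = smult (cnj c) (cstar p)"
  by (simp add: cstar_def map_poly_cnj_smult reflect_poly_smult)

lemma cstar_linear: "s \<noteq> 0 \<Longrightarrow> cstar [:-s,1:] = smult (- cnj s) [:-refl_T s, 1:]"
  by (simp add: cstar_def map_poly_pCons reflect_poly_def refl_T_def)

lemma cstar_PP: "0 \<notin># S \<Longrightarrow> cstar (PP S) = smult (\<Prod>s\<in>#S. - cnj s) (PP (image_mset refl_T S))"
proof (induction S)
  case (add x S)
  hence x: "x \<noteq> 0" and IH: "cstar (PP S) = smult (\<Prod>s\<in>#S. - cnj s) (PP (image_mset refl_T S))" by auto
  have "cstar (PP (add_mset x S)) = cstar [:-x,1:] * cstar (PP S)" by (simp only: PP_add cstar_mult)
  also have "\<dots> = smult (-cnj x) [:-refl_T x,1:] * smult (\<Prod>s\<in>#S. - cnj s) (PP (image_mset refl_T S))"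
    by (simp only: cstar_linear[OF x] IH)
  also have "\<dots> = smult (-cnj x * (\<Prod>s\<in>#S. - cnj s)) ([:-refl_T x,1:] * PP (image_mset refl_T S))"
    by (simp only: mult_smult_left mult_smult_right smult_smult mult.commute)
  also have "\<dots> = smult (\<Prod>s\<in>#add_mset x S. - cnj s) (PP (image_mset refl_T (add_mset x S)))"
    by (simp only: PP_add image_mset_add_mset prod_mset.add_mset)
  finally show ?case .
qed (simp add: cstar_def)

lemma poly_cstar: "z \<noteq> 0 \<Longrightarrow> poly (cstar p) z = z ^ degree p * cnj (poly p (refl_T z))"
  by (simp add: cstar_def poly_reflect_poly_nz refl_T_def degree_map_poly inverse_eq_divide)

lemma star_eval_refl: "star_eval p z = cnj (poly p (refl_T z))"
  by (simp add: star_eval_def refl_T_def)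

definition QQ :: "complex poly \<Rightarrow> complex poly" where
  "QQ p = p * cstar p"

lemma coeff_cstar_0: "coeff (cstar p) 0 = cnj (lead_coeff p)"
  by (simp add: cstar_def degree_map_poly coeff_map_poly)

lemma degree_cstar: "poly p 0 \<noteq> 0 \<Longrightarrow> degree (cstar p) = degree p"
  by (simp add: cstar_def degree_map_poly coeff_map_poly poly_0_coeff_0)

lemma cstar_nz: "p \<noteq> 0 \<Longrightarrow> cstar p \<noteq> 0"
  by (simp add: cstar_def map_poly_eq_0_iff)

lemma lead_cstar: "poly p 0 \<noteq> 0 \<Longrightarrow> lead_coeff (cstar p) = cnj (poly p 0)"
  by (simp add: cstar_def degree_map_poly coeff_map_poly poly_0_coeff_0 coeff_reflect_poly)

lemma QQ_nz: "p \<noteq> 0 \<Longrightarrow> QQ p \<noteq> 0"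
  by (simp add: QQ_def cstar_nz)

lemma QQ_coeff0: "poly p 0 \<noteq> 0 \<Longrightarrow> coeff (QQ p) 0 \<noteq> 0"
  by (auto simp: QQ_def coeff_mult_0 coeff_cstar_0 poly_0_coeff_0)

lemma lead_QQ: "poly p 0 \<noteq> 0 \<Longrightarrow> lead_coeff (QQ p) = lead_coeff p * cnj (poly p 0)"
  by (simp add: QQ_def lead_coeff_mult lead_cstar)

lemma poly_QQ: "z \<noteq> 0 \<Longrightarrow> poly (QQ p) z = z ^ degree p * (poly p z * star_eval p z)"
  by (simp add: QQ_def poly_cstar star_eval_refl)

lemma QQ_smult: "QQ (smult k p) = smult (k * cnj k) (QQ p)"
  by (simp add: QQ_def cstar_smult mult.commute)

lemma decomp: "smult (lead_coeff p) (PP (proots p)) = p"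
  unfolding PP_def by (rule complex_poly_decompose_multiset)

lemma zero_notin_proots: "poly p 0 \<noteq> 0 \<Longrightarrow> 0 \<notin># proots p"
  by (cases "p = 0") auto

lemma proots_cstar: "poly p 0 \<noteq> 0 \<Longrightarrow> proots (cstar p) = image_mset refl_T (proots p)"
proof -
  assume h: "poly p 0 \<noteq> 0"
  hence pnz: "p \<noteq> 0" by auto
  let ?S = "proots p"
  have z: "0 \<notin># ?S" using h by (rule zero_notin_proots)
  have "cstar p = cstar (smult (lead_coeff p) (PP ?S))" by (simp add: decomp)
  also have "\<dots> = smult (cnj (lead_coeff p)) (smult (\<Prod>s\<in>#?S. - cnj s) (PP (image_mset refl_T ?S)))"
    by (simp only: cstar_smult cstar_PP[OF z])
  finally have eq: "cstar p = smult (cnj (lead_coeff p) * (\<Prod>s\<in>#?S. - cnj s)) (PP (image_mset refl_T ?S))"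
    by simp
  have "(\<Prod>s\<in>#?S. - cnj s) \<noteq> 0" using z by (auto simp: prod_mset_zero_iff)
  moreover have "cnj (lead_coeff p) \<noteq> 0" using pnz by simp
  ultimately show ?thesis by (simp add: eq)
qed

lemma proots_QQ: "poly p 0 \<noteq> 0 \<Longrightarrow> proots (QQ p) = proots p + image_mset refl_T (proots p)"
proof -
  assume h: "poly p 0 \<noteq> 0"
  hence pnz: "p \<noteq> 0" by auto
  show ?thesis unfolding QQ_def
    by (simp add: proots_mult pnz cstar_nz proots_cstar h)
qed

lemma same_roots_smult:
  fixes p q :: "complex poly"
  assumes "p \<noteq> 0" "q \<noteq> 0" "proots p = proots q"
  shows "q = smult (lead_coeff q / lead_coeff p) p"
proof -
  have "q = smult (lead_coeff q) (PP (proots q))" by (simp add: decomp)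
  also have "\<dots> = smult (lead_coeff q / lead_coeff p) (smult (lead_coeff p) (PP (proots p)))"
    using assms by simp
  also have "\<dots> = smult (lead_coeff q / lead_coeff p) p" by (simp only: decomp)
  finally show ?thesis .
qed

lemma infinite_nonzero: "infinite {z::complex. z \<noteq> 0}"
proof -
  have "{z::complex. z \<noteq> 0} = UNIV - {0}" by auto
  thus ?thesis using Diff_infinite_finite[of "{0}" UNIV] infinite_UNIV_char_0 by auto
qed

lemma modsq_iff:
  assumes a0: "poly a 0 \<noteq> 0" and b0: "poly b 0 \<noteq> 0"
  shows "same_modsq a b \<longleftrightarrow> degree a = degree b \<and> QQ a = QQ b"
proof
  assume h: "degree a = degree b \<and> QQ a = QQ b"
  have "{z. z \<noteq> 0} \<subseteq> {z. z \<noteq> 0 \<and> poly a z * star_eval a z = poly b z * star_eval b z}"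
  proof safe
    fix z :: complex assume z: "z \<noteq> 0"
    have "z ^ degree a * (poly a z * star_eval a z) = z ^ degree a * (poly b z * star_eval b z)"
      using poly_QQ[OF z, of a] poly_QQ[OF z, of b] h by metis
    thus "poly a z * star_eval a z = poly b z * star_eval b z" using z by simp
  qed
  thus "same_modsq a b" unfolding same_modsq_def using infinite_nonzero infinite_super by blast
next
  assume h: "same_modsq a b"
  define m where "m = degree a"
  define n where "n = degree b"
  define D where "D = monom 1 n * QQ a - monom 1 m * QQ b"
  have "{z. z \<noteq> 0 \<and> poly a z * star_eval a z = poly b z * star_eval b z} \<subseteq> {z. poly D z = 0}"
  proof safe
    fix z :: complex assume z: "z \<noteq> 0" and e: "poly a z * star_eval a z = poly b z * star_eval b z"
    show "poly D z = 0" unfolding D_def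
      using poly_QQ[OF z, of a] poly_QQ[OF z, of b] e by (simp add: poly_monom m_def n_def algebra_simps)
  qed
  hence "infinite {z. poly D z = 0}" using h unfolding same_modsq_def using finite_subset by blast
  hence "D = 0" using poly_roots_finite by blast
  hence eq: "monom 1 n * QQ a = monom 1 m * QQ b" unfolding D_def by simp
  have ca: "coeff (QQ a) 0 \<noteq> 0" and cb: "coeff (QQ b) 0 \<noteq> 0" using a0 b0 QQ_coeff0 by auto
  have "n = m"
  proof (rule ccontr)
    assume "n \<noteq> m"
    hence "n < m \<or> m < n" by auto
    thus False
    proof
      assume "n < m"
      have "coeff (monom 1 n * QQ a) n = coeff (monom 1 m * QQ b) n" using eq by simp
      thus False using `n < m` ca by (simp add: coeff_monom_mult)
    next
      assume "m < n"
      have "coeff (monom 1 n * QQ a) m = coeff (monom 1 m * QQ b) m" using eq by simp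
      thus False using `m < n` cb by (simp add: coeff_monom_mult)
    qed
  qed
  moreover have "monom (1::complex) n \<noteq> 0" by simp
  ultimately have "QQ a = QQ b" using eq by simp
  thus "degree a = degree b \<and> QQ a = QQ b" using `n = m` m_def n_def by simp
qed




definition Sols :: "complex multiset \<Rightarrow> complex multiset set" where
  "Sols R = {S. S + image_mset refl_T S = R}"

lemma filter_all: "(\<And>x. x \<in># M \<Longrightarrow> P x) \<Longrightarrow> filter_mset P M = M"
  by (induction M) auto

lemma filter_none: "(\<And>x. x \<in># M \<Longrightarrow> \<not> P x) \<Longrightarrow> filter_mset P M = {#}"
  by (induction M) auto

lemma filter_image_refl:
  assumes "\<And>x. Q (refl_T x) = Q x"
  shows "filter_mset Q (image_mset refl_T M) = image_mset refl_T (filter_mset Q M)"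
proof -
  have "(\<lambda>x. Q (refl_T x)) = Q" using assms by auto
  thus ?thesis using image_mset_filter_mset_swap[of refl_T Q M] by simp
qed

lemma count_sol: "S + image_mset refl_T S = R \<Longrightarrow> count S x + count S (refl_T x) = count R x"
  by (auto simp: count_image_refl)

lemma one_class:
  assumes a0: "\<alpha> \<noteq> 0" and y: "y = B + image_mset refl_T B"
    and B: "\<And>x. x \<in># B \<Longrightarrow> x = \<alpha> \<or> x = refl_T \<alpha>" and ay: "\<alpha> \<in># y"
  shows "card (Sols y) = sharp y"
proof -
  have cy: "count y x = count B x + count B (refl_T x)" for x
    using y by (simp add: count_image_refl)
  have cB0: "count B x = 0" if "x \<noteq> \<alpha>" "x \<noteq> refl_T \<alpha>" for x
    using B that by (meson count_inI)
  have solc: "count S x + count S (refl_T x) = count y x" if "S \<in> Sols y" for S x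
    using that count_sol[of S y x] unfolding Sols_def by simp
  show ?thesis
  proof (cases "norm \<alpha> = 1")
    case True
    hence ra: "refl_T \<alpha> = \<alpha>" by (rule refl_T_circle)
    have cy0: "count y x = 0" if "x \<noteq> \<alpha>" for x
    proof -
      have "refl_T x \<noteq> \<alpha>" using that ra by (metis refl_T_refl_T)
      thus ?thesis using cy cB0 that ra by simp
    qed
    have "Sols y = {B}"
    proof safe
      show "B \<in> Sols y" using y by (simp add: Sols_def)
    next
      fix S assume S: "S \<in> Sols y"
      show "S = B"
      proof (rule multiset_eqI)
        fix x
        show "count S x = count B x"
        proof (cases "x = \<alpha>")
          case True
          thus ?thesis using solc[OF S, of x] cy[of x] ra by simp
        next
          case False
          thus ?thesis using solc[OF S, of x] cy[of x] cy0[OF False] by simp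
        qed
      qed
    qed
    moreover have "sharp y = 1" using ay True unfolding sharp_def by auto
    ultimately show ?thesis by simp
  next
    case False
    define \<beta> where "\<beta> = refl_T \<alpha>"
    have ab: "\<alpha> \<noteq> \<beta>"
    proof
      assume "\<alpha> = \<beta>"
      hence "norm \<alpha> = 1 / norm \<alpha>" unfolding \<beta>_def by (metis norm_refl_T)
      hence "norm \<alpha> * norm \<alpha> = 1" using a0 by (simp add: field_simps)
      hence "(norm \<alpha> - 1) * (norm \<alpha> + 1) = 0" by (simp add: algebra_simps)
      moreover have "norm \<alpha> + 1 \<noteq> 0" by (smt (verit) norm_ge_zero)
      ultimately show False using False by simp
    qed
    have rb: "refl_T \<beta> = \<alpha>" by (simp add: \<beta>_def)
    have nb: "norm \<beta> \<noteq> 1" using False unfolding \<beta>_def by (simp add: norm_refl_T)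
    define n where "n = count B \<alpha> + count B \<beta>"
    have cya: "count y \<alpha> = n" and cyb: "count y \<beta> = n"
      using cy[of \<alpha>] cy[of \<beta>] rb n_def \<beta>_def by auto
    have cy0: "count y x = 0" if "x \<noteq> \<alpha>" "x \<noteq> \<beta>" for x
    proof -
      have "refl_T x \<noteq> \<alpha>" "refl_T x \<noteq> \<beta>" using that rb \<beta>_def by (metis refl_T_refl_T)+
      thus ?thesis using cy[of x] cB0[of x] cB0[of "refl_T x"] that \<beta>_def by simp
    qed
    define f where "f i = replicate_mset i \<alpha> + replicate_mset (n - i) \<beta>" for i
    have cf: "count (f i) x = (if x = \<alpha> then i else if x = \<beta> then n - i else 0)" for i x
      using ab by (auto simp: f_def)
    have "Sols y = f ` {0..n}"
    proof safe
      fix S assume S: "S \<in> Sols y"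
      have s1: "count S \<alpha> + count S \<beta> = n" using solc[OF S, of \<alpha>] cya \<beta>_def by simp
      have "S = f (count S \<alpha>)"
      proof (rule multiset_eqI)
        fix x
        show "count S x = count (f (count S \<alpha>)) x"
        proof -
          consider "x = \<alpha>" | "x = \<beta>" | "x \<noteq> \<alpha> \<and> x \<noteq> \<beta>" by blast
          thus ?thesis
          proof cases
            case 1 thus ?thesis by (simp add: cf)
          next
            case 2 thus ?thesis using s1 ab by (simp add: cf)
          next
            case 3 thus ?thesis using solc[OF S, of x] cy0[of x] by (simp add: cf)
          qed
        qed
      qed
      moreover have "count S \<alpha> \<in> {0..n}" using s1 by simp
      ultimately show "S \<in> f ` {0..n}" by blast
    next
      fix i assume i: "i \<in> {0..n}"
      show "f i \<in> Sols y" unfolding Sols_def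
      proof (simp, rule multiset_eqI)
        fix x
        show "count (f i + image_mset refl_T (f i)) x = count y x"
        proof -
          consider "x = \<alpha>" | "x = \<beta>" | "x \<noteq> \<alpha> \<and> x \<noteq> \<beta>" by blast
          thus ?thesis
          proof cases
            case 1 thus ?thesis using i ab \<beta>_def cya by (simp add: cf count_image_refl)
          next
            case 2 thus ?thesis using i ab rb cyb by (simp add: cf count_image_refl)
          next
            case 3
            have "refl_T x \<noteq> \<alpha>" "refl_T x \<noteq> \<beta>" using 3 rb \<beta>_def by (metis refl_T_refl_T)+
            thus ?thesis using 3 cy0[of x] by (simp add: cf count_image_refl)
          qed
        qed
      qed
    qed
    moreover have "inj_on f {0..n}"
    proof (rule inj_onI)
      fix i j assume "f i = f j"
      hence "count (f i) \<alpha> = count (f j) \<alpha>" by simp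
      thus "i = j" by (simp add: cf)
    qed
    ultimately have c1: "card (Sols y) = n + 1" by (simp add: card_image)
    have yeq: "y = replicate_mset n \<alpha> + replicate_mset n \<beta>"
    proof (rule multiset_eqI)
      fix x show "count y x = count (replicate_mset n \<alpha> + replicate_mset n \<beta>) x"
        using cya cyb cy0[of x] ab by auto
    qed
    have "size y = 2 * n" using yeq by simp
    moreover have "\<not> (\<exists>z\<in>#y. norm z = 1)" using yeq False nb by (auto split: if_splits)
    ultimately have "sharp y = n + 1" unfolding sharp_def by simp
    with c1 show ?thesis by simp
  qed
qed

lemma count_sols:
  "0 \<notin># A \<Longrightarrow> card (Sols (A + image_mset refl_T A)) = count_N (A + image_mset refl_T A)"
proof (induction "size A" arbitrary: A rule: less_induct)
  case less
  show ?case
  proof (cases "A = {#}")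
    case True
    have "Sols {#} = {{#}}" by (auto simp: Sols_def)
    thus ?thesis using True by (simp add: count_N_def classes_def)
  next
    case False
    then obtain \<alpha> where aA: "\<alpha> \<in># A" by (meson multiset_nonemptyE)
    have a0: "\<alpha> \<noteq> 0" using less.prems aA by auto
    define P where "P x \<longleftrightarrow> x = \<alpha> \<or> x = refl_T \<alpha>" for x
    have Pr: "P (refl_T x) = P x" for x unfolding P_def by (metis refl_T_refl_T)
    have Pr': "(\<not> P (refl_T x)) = (\<not> P x)" for x using Pr by simp
    define R where "R = A + image_mset refl_T A"
    define A1 where "A1 = filter_mset (\<lambda>x. \<not> P x) A"
    define B where "B = filter_mset P A"
    define R1 where "R1 = filter_mset (\<lambda>x. \<not> P x) R"
    define y where "y = filter_mset P R"
    have R1eq: "R1 = A1 + image_mset refl_T A1"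
      unfolding R1_def A1_def R_def using filter_image_refl[of "\<lambda>x. \<not> P x", OF Pr'] by simp
    have yeq: "y = B + image_mset refl_T B"
      unfolding y_def B_def R_def using filter_image_refl[of P, OF Pr] by simp
    have Rsplit: "R = y + R1" unfolding y_def R1_def by (rule multiset_partition)
    have sA: "size A = size B + size A1" unfolding B_def A1_def
      by (metis multiset_partition size_union)
    have "\<alpha> \<in># B" using aA by (simp add: B_def P_def)
    hence "size B \<noteq> 0" by auto
    hence szlt: "size A1 < size A" using sA by linarith
    have "0 \<notin># A1" using less.prems by (simp add: A1_def)
    hence IH: "card (Sols R1) = count_N R1" using less.hyps[OF szlt] R1eq by simp
    have ay: "\<alpha> \<in># y" using aA by (simp add: y_def R_def P_def)
    have one: "card (Sols y) = sharp y"
      by (rule one_class[OF a0 yeq _ ay]) (auto simp: B_def P_def)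
    have S1P: "\<not> P x" if "S1 \<in> Sols R1" "x \<in># S1" for S1 x
    proof -
      have "x \<in># R1" using that by (auto simp: Sols_def)
      thus ?thesis by (simp add: R1_def)
    qed
    have TP: "P x" if "T \<in> Sols y" "x \<in># T" for T x
    proof -
      have "x \<in># y" using that by (auto simp: Sols_def)
      thus ?thesis by (simp add: y_def)
    qed
    let ?g = "\<lambda>(S1, T). S1 + T"
    have img: "?g ` (Sols R1 \<times> Sols y) = Sols R"
    proof (rule set_eqI, rule iffI)
      fix S assume "S \<in> ?g ` (Sols R1 \<times> Sols y)"
      then obtain S1 T where h: "S1 \<in> Sols R1" "T \<in> Sols y" "S = S1 + T" by auto
      thus "S \<in> Sols R" using Rsplit by (auto simp: Sols_def)
    next
      fix S assume S: "S \<in> Sols R"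
      define S1 where "S1 = filter_mset (\<lambda>x. \<not> P x) S"
      define T where "T = filter_mset P S"
      have "S1 + image_mset refl_T S1 = filter_mset (\<lambda>x. \<not> P x) (S + image_mset refl_T S)"
        unfolding S1_def using filter_image_refl[of "\<lambda>x. \<not> P x", OF Pr'] by simp
      moreover have SR: "S + image_mset refl_T S = R" using S by (simp add: Sols_def)
      ultimately have "S1 + image_mset refl_T S1 = filter_mset (\<lambda>x. \<not> P x) R" by (simp only:)
      hence s1: "S1 \<in> Sols R1" by (simp add: Sols_def R1_def)
      have "T + image_mset refl_T T = filter_mset P (S + image_mset refl_T S)"
        unfolding T_def using filter_image_refl[of P, OF Pr] by simp
      hence "T + image_mset refl_T T = filter_mset P R" using SR by (simp only:)
      hence t: "T \<in> Sols y" by (simp add: Sols_def y_def)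
      have "S = S1 + T" unfolding S1_def T_def by (metis multiset_partition add.commute)
      thus "S \<in> ?g ` (Sols R1 \<times> Sols y)" using s1 t by force
    qed
    have inj: "inj_on ?g (Sols R1 \<times> Sols y)"
    proof (rule inj_onI, clarify)
      fix S1 T S1' T'
      assume h: "S1 \<in> Sols R1" "T \<in> Sols y" "S1' \<in> Sols R1" "T' \<in> Sols y" "S1 + T = S1' + T'"
      have f1: "filter_mset (\<lambda>x. \<not> P x) (S1 + T) = S1"
        if "S1 \<in> Sols R1" "T \<in> Sols y" for S1 T
        using that S1P TP by (simp add: filter_all filter_none)
      have f2: "filter_mset P (S1 + T) = T"
        if "S1 \<in> Sols R1" "T \<in> Sols y" for S1 T
        using that S1P TP by (simp add: filter_all filter_none)
      show "S1 = S1' \<and> T = T'"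
        using f1[OF h(1,2)] f1[OF h(3,4)] f2[OF h(1,2)] f2[OF h(3,4)] h(5) by metis
    qed
    have cardR: "card (Sols R) = card (Sols R1) * card (Sols y)"
      using card_image[OF inj] img by (simp add: card_cartesian_product)
    have ecR1: "eq_class R x = eq_class R1 x" if "x \<in># R1" for x
    proof -
      have nPx: "\<not> P x" using that by (simp add: R1_def)
      have np: "\<not> P \<beta>" if "\<beta> = x \<or> \<beta> = refl_T x" for \<beta> using that nPx Pr by auto
      show ?thesis unfolding eq_class_def R1_def
        by (rule multiset_eqI) (use np in auto)
    qed
    have ecy: "eq_class R x = y" if "x \<in># y" for x
    proof -
      have "P x" using that by (simp add: y_def)
      hence "(\<lambda>\<beta>. \<beta> = x \<or> \<beta> = refl_T x) = P" unfolding P_def by (auto simp: fun_eq_iff)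
      thus ?thesis unfolding eq_class_def y_def by simp
    qed
    have "classes R = eq_class R ` set_mset y \<union> eq_class R ` set_mset R1"
      unfolding classes_def using Rsplit by (simp add: image_Un)
    also have "eq_class R ` set_mset y = {y}" using ecy ay by auto
    also have "eq_class R ` set_mset R1 = classes R1"
      unfolding classes_def using ecR1 by (simp cong: image_cong)
    finally have clR: "classes R = insert y (classes R1)" by simp
    have ynot: "y \<notin> classes R1"
    proof
      assume "y \<in> classes R1"
      then obtain x where "y = eq_class R1 x" unfolding classes_def by auto
      hence "\<alpha> \<in># R1" using ay unfolding eq_class_def by simp
      thus False by (simp add: R1_def P_def)
    qed
    have fin: "finite (classes R1)" unfolding classes_def by simp
    have "count_N R = sharp y * count_N R1"
      unfolding count_N_def clR using fin ynot by simp
    thus ?thesis using cardR IH one R_def by simp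
  qed
qed




lemma circle_nonroot:
  fixes p :: "complex poly"
  assumes "p \<noteq> 0"
  shows "\<exists>z. norm z = 1 \<and> poly p z \<noteq> 0"
proof (rule ccontr)
  assume "\<not> ?thesis"
  hence "sphere 0 1 \<subseteq> {z. poly p z = 0}" by auto
  hence fin: "finite (sphere (0::complex) 1)" using poly_roots_finite[OF assms] finite_subset by blast
  have "connected (sphere (0::complex) 1)" by (rule connected_sphere) simp
  hence sc: "sphere (0::complex) 1 = {} \<or> (\<exists>a. sphere (0::complex) 1 = {a})"
    using connected_finite_iff_sing fin by blast
  have m1: "(1::complex) \<in> sphere 0 1" and m2: "(-1::complex) \<in> sphere 0 1" by auto
  have ne: "(1::complex) \<noteq> -1" by simp
  show False
  proof (cases "sphere (0::complex) 1 = {}")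
    case True thus False using m1 by simp
  next
    case False
    then obtain a where "sphere (0::complex) 1 = {a}" using sc by blast
    hence "(1::complex) = a" "(-1::complex) = a" using m1 m2 by auto
    thus False using ne by simp
  qed
qed

lemma poly_QQ_circle:
  assumes "norm z = 1"
  shows "poly (QQ p) z = z ^ degree p * of_real ((norm (poly p z))^2)"
proof -
  have z: "z \<noteq> 0" using assms by auto
  have "star_eval p z = cnj (poly p z)" using refl_T_circle[OF assms] by (simp add: star_eval_refl)
  hence "poly (QQ p) z = z ^ degree p * (poly p z * cnj (poly p z))" using poly_QQ[OF z, of p] by simp
  also have "poly p z * cnj (poly p z) = of_real ((norm (poly p z))^2)" by (rule complex_norm_square[symmetric])
  finally show ?thesis .
qed

lemma poly_smult_0: "poly (smult k p) 0 = k * poly p 0"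
  by simp

lemma card_pos:
  assumes a0: "poly a 0 \<noteq> 0"
  shows "card {c :: complex poly. poly c 0 \<noteq> 0 \<and> same_modsq a c \<and> poly c 0 \<in> \<real> \<and> Re (poly c 0) > 0}
         = card (Sols (proots a + image_mset refl_T (proots a)))"
proof -
  define C where "C = {c :: complex poly. poly c 0 \<noteq> 0 \<and> same_modsq a c \<and> poly c 0 \<in> \<real> \<and> Re (poly c 0) > 0}"
  define R where "R = proots a + image_mset refl_T (proots a)"
  have anz: "a \<noteq> 0" using a0 by auto
  have QQa: "proots (QQ a) = R" using proots_QQ[OF a0] R_def by simp
  have "bij_betw proots C (Sols R)"
  proof (rule bij_betw_imageI)
    show "inj_on proots C"
    proof (rule inj_onI)
      fix c1 c2 assume c1: "c1 \<in> C" and c2: "c2 \<in> C" and e: "proots c1 = proots c2"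
      have c10: "poly c1 0 \<noteq> 0" and c20: "poly c2 0 \<noteq> 0" using c1 c2 by (auto simp: C_def)
      hence n1: "c1 \<noteq> 0" and n2: "c2 \<noteq> 0" by auto
      have q1: "QQ a = QQ c1" using c1 modsq_iff[OF a0 c10] by (auto simp: C_def)
      have q2: "QQ a = QQ c2" using c2 modsq_iff[OF a0 c20] by (auto simp: C_def)
      define t where "t = lead_coeff c2 / lead_coeff c1"
      have c2eq: "c2 = smult t c1" using same_roots_smult[OF n1 n2 e] t_def by simp
      have eqQ: "QQ c1 = smult (t * cnj t) (QQ c1)" using q1 q2 c2eq QQ_smult by metis
      have L: "lead_coeff (smult (t * cnj t) (QQ c1)) = t * cnj t * lead_coeff (QQ c1)" by (rule lead_coeff_smult)
      have X: "lead_coeff (QQ c1) = t * cnj t * lead_coeff (QQ c1)"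
        using L by (simp only: eqQ[symmetric])
      hence "lead_coeff (QQ c1) = 0 \<or> t * cnj t = 1" by (simp only: mult_cancel_right1)
      moreover have "lead_coeff (QQ c1) \<noteq> 0" using QQ_nz[OF n1] by simp
      ultimately have tt: "t * cnj t = 1" by blast
      have p0: "poly c2 0 = t * poly c1 0" using c2eq by simp
      obtain r1 where r1: "poly c1 0 = of_real r1" "r1 > 0" using c1 unfolding C_def by (auto elim!: Reals_cases)
      obtain r2 where r2: "poly c2 0 = of_real r2" "r2 > 0" using c2 unfolding C_def by (auto elim!: Reals_cases)
      have "t = of_real (r2 / r1)" using p0 r1 r2 by (simp add: field_simps)
      define q where "q = r2 / r1"
      have q0: "q > 0" using r1 r2 by (simp add: q_def)
      have "complex_of_real (q * q) = 1" using tt `t = of_real (r2 / r1)` q_def by simp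
      hence "q * q = 1" by (metis of_real_eq_1_iff)
      hence "(q - 1) * (q + 1) = 0" by (simp add: algebra_simps)
      hence "r2 / r1 = 1" using q0 q_def by simp
      hence "t = 1" using `t = of_real (r2 / r1)` by simp
      thus "c1 = c2" using c2eq by simp
    qed
  next
    show "proots ` C = Sols R"
    proof safe
      fix c assume c: "c \<in> C"
      have c0: "poly c 0 \<noteq> 0" using c by (auto simp: C_def)
      have "QQ a = QQ c" using c modsq_iff[OF a0 c0] by (auto simp: C_def)
      thus "proots c \<in> Sols R" using proots_QQ[OF c0] QQa by (simp add: Sols_def)
    next
      fix S assume S: "S \<in> Sols R"
      hence SR: "S + image_mset refl_T S = R" by (simp add: Sols_def)
      have "0 \<notin># R" using zero_notin_proots[OF a0] unfolding R_def by auto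
      hence S0: "0 \<notin># S" using SR by auto
      define p where "p = PP S"
      have p0: "poly p 0 \<noteq> 0" using S0 by (simp add: p_def poly_PP_0 prod_mset_zero_iff)
      have pnz: "p \<noteq> 0" by (simp add: p_def)
      have "proots (QQ p) = R" using proots_QQ[OF p0] SR by (simp add: p_def)
      hence er: "proots (QQ p) = proots (QQ a)" using QQa by simp
      define t where "t = lead_coeff (QQ a) / lead_coeff (QQ p)"
      have QQaeq: "QQ a = smult t (QQ p)" using same_roots_smult[OF QQ_nz[OF pnz] QQ_nz[OF anz] er] t_def by simp
      have tnz: "t \<noteq> 0" using QQ_nz[OF anz] QQ_nz[OF pnz] by (simp add: t_def)
      have "size R = 2 * size S" using SR by auto
      moreover have "size R = 2 * degree a" by (simp add: R_def size_proots_complex)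
      ultimately have degp: "degree p = degree a" by (simp add: p_def)
      obtain z where z: "norm z = 1" "poly p z \<noteq> 0" using circle_nonroot[OF pnz] by blast
      have zn: "z \<noteq> 0" using z by auto
      have "poly (QQ a) z = t * poly (QQ p) z" using QQaeq by simp
      hence "z ^ degree a * of_real ((norm (poly a z))^2) = t * (z ^ degree a * of_real ((norm (poly p z))^2))"
        using poly_QQ_circle[OF z(1), of a] poly_QQ_circle[OF z(1), of p] degp by simp
      hence "of_real ((norm (poly a z))^2) = t * of_real ((norm (poly p z))^2)" using zn by simp
      hence teq: "t = of_real ((norm (poly a z))^2 / (norm (poly p z))^2)" using z(2) by (simp add: field_simps)
      define r where "r = (norm (poly a z))^2 / (norm (poly p z))^2"
      have tr: "t = of_real r" using teq r_def by simp
      have "r \<ge> 0" by (simp add: r_def)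
      moreover have "r \<noteq> 0" using tnz tr by simp
      ultimately have r0: "r > 0" by simp
      define np where "np = norm (poly p 0)"
      have np0: "np > 0" using p0 np_def by simp
      define K where "K = of_real (sqrt r / np) * cnj (poly p 0)"
      have pc: "poly p 0 * cnj (poly p 0) = of_real (np^2)" unfolding np_def by (rule complex_norm_square[symmetric])
      have KK: "K * cnj K = t"
      proof -
        have "K * cnj K = of_real (sqrt r / np) * of_real (sqrt r / np) * (poly p 0 * cnj (poly p 0))"
          by (simp add: K_def mult_ac)
        also have "\<dots> = of_real (sqrt r / np) * of_real (sqrt r / np) * of_real (np^2)" by (simp only: pc)
        also have "\<dots> = of_real (sqrt r / np * (sqrt r / np) * np^2)" by (simp only: of_real_mult)
        also have "sqrt r / np * (sqrt r / np) * np^2 = r" using r0 np0 by (simp add: field_simps power2_eq_square)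
        finally show ?thesis using tr by simp
      qed
      have Knz: "K \<noteq> 0" using r0 np0 p0 by (simp add: K_def)
      define c where "c = smult K p"
      have c0v: "poly c 0 = of_real (sqrt r * np)"
      proof -
        have "poly c 0 = of_real (sqrt r / np) * (cnj (poly p 0) * poly p 0)" by (simp add: c_def K_def mult_ac)
        also have "\<dots> = of_real (sqrt r / np) * of_real (np^2)" using pc by (simp only: mult.commute)
        also have "\<dots> = of_real (sqrt r / np * np^2)" by (simp only: of_real_mult)
        also have "sqrt r / np * np^2 = sqrt r * np" using np0 by (simp add: power2_eq_square)
        finally show ?thesis .
      qed
      have c0: "poly c 0 \<noteq> 0" using c0v r0 np0 by simp
      have "QQ c = QQ a" using QQaeq KK by (simp add: c_def QQ_smult)
      moreover have "degree c = degree a" using Knz degp by (simp add: c_def)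
      ultimately have "same_modsq a c" using modsq_iff[OF a0 c0] by simp
      hence "c \<in> C" using c0 c0v r0 np0 by (simp add: C_def)
      moreover have "proots c = S" using Knz by (simp add: c_def p_def)
      ultimately show "S \<in> proots ` C" by blast
    qed
  qed
  thus ?thesis unfolding C_def R_def by (rule bij_betw_same_card)
qed

lemma modsq_neg [simp]: "same_modsq a (-c) = same_modsq a c"
  by (simp add: same_modsq_def star_eval_def)

lemma card_neg:
  "card {c :: complex poly. poly c 0 \<noteq> 0 \<and> same_modsq a c \<and> poly c 0 \<in> \<real> \<and> Re (poly c 0) < 0}
 = card {c :: complex poly. poly c 0 \<noteq> 0 \<and> same_modsq a c \<and> poly c 0 \<in> \<real> \<and> Re (poly c 0) > 0}"
  (is "card ?N = card ?P")
proof -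
  have "?N = uminus ` ?P"
  proof (rule set_eqI, rule iffI)
    fix c assume c: "c \<in> ?N"
    have "-c \<in> ?P" using c by simp
    thus "c \<in> uminus ` ?P" by (rule rev_image_eqI) simp
  next
    fix c assume "c \<in> uminus ` ?P"
    then obtain d where d: "d \<in> ?P" "c = -d" by blast
    thus "c \<in> ?N" by simp
  qed
  moreover have "inj_on uminus ?P" by (simp add: inj_on_def)
  ultimately show ?thesis by (simp add: card_image)
qed

lemma diff_facts:
  fixes A B :: "complex multiset"
  assumes ce: "\<And>x. count A x + count A (refl_T x) = count B x + count B (refl_T x)"
  shows "\<forall>y\<in>#(A - A \<inter># B). y \<notin># (B - A \<inter># B) \<and> refl_T y \<notin># (A - A \<inter># B)
            \<and> count (B - A \<inter># B) (refl_T y) = count (A - A \<inter># B) y"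
proof
  fix y assume y: "y \<in># A - A \<inter># B"
  define a1 where "a1 = count A y"
  define a2 where "a2 = count A (refl_T y)"
  define b1 where "b1 = count B y"
  define b2 where "b2 = count B (refl_T y)"
  have e1: "a1 + a2 = b1 + b2" unfolding a1_def a2_def b1_def b2_def by (rule ce)
  have lt: "b1 < a1" using y unfolding a1_def b1_def by (simp add: in_diff_count)
  have "\<not> (min a1 b1 < b1)" using lt by simp
  hence i1: "y \<notin># (B - A \<inter># B)" unfolding a1_def b1_def by (simp add: in_diff_count)
  have "\<not> (min a2 b2 < a2)" using lt e1 by simp
  hence i2: "refl_T y \<notin># (A - A \<inter># B)" unfolding a2_def b2_def by (simp add: in_diff_count)
  have "b2 - min a2 b2 = a1 - min a1 b1" using lt e1 by simp
  hence i3: "count (B - A \<inter># B) (refl_T y) = count (A - A \<inter># B) y"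
    unfolding a1_def a2_def b1_def b2_def by simp
  show "y \<notin># (B - A \<inter># B) \<and> refl_T y \<notin># (A - A \<inter># B)
            \<and> count (B - A \<inter># B) (refl_T y) = count (A - A \<inter># B) y"
    using i1 i2 i3 by blast
qed




theorem lemmaA1:
  fixes a b :: "complex poly"
  assumes a0: "poly a 0 \<noteq> 0" and b0: "poly b 0 \<noteq> 0"
    and hyp: "same_modsq a b"
  defines "Ra \<equiv> proots a" and "Rb \<equiv> proots b"
    and "Rab \<equiv> proots a \<inter># proots b"
    and "Ra' \<equiv> proots a - (proots a \<inter># proots b)"
    and "Rb' \<equiv> proots b - (proots a \<inter># proots b)"
  shows "(degree a = degree b)
       \<and> (Ra + image_mset refl_T Ra = Rb + image_mset refl_T Rb)
       \<and> (\<forall>z. norm z = 1 \<longrightarrow> count Ra z = count Rab z \<and> count Rb z = count Rab z)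
       \<and> (\<forall>z\<in>#Ra'. norm z \<noteq> 1) \<and> (\<forall>z\<in>#Rb'. norm z \<noteq> 1)
       \<and> (\<forall>y\<in>#Ra'. y \<notin># Rb' \<and> refl_T y \<notin># Ra' \<and> count Rb' (refl_T y) = count Ra' y)
       \<and> (\<forall>y\<in>#Rb'. y \<notin># Ra' \<and> refl_T y \<notin># Rb' \<and> count Ra' (refl_T y) = count Rb' y)
       \<and> (size Ra' = size Rb')
       \<and> (prod_mset Ra' = prod_mset (image_mset refl_T Rb'))
       \<and> (\<exists>u. norm u = 1 \<and>
           lead_coeff b = u * lead_coeff a * complex_of_real (norm (prod_mset Ra')))
       \<and> (card {c :: complex poly. poly c 0 \<noteq> 0 \<and> same_modsq a c \<and>
                 poly c 0 \<in> \<real> \<and> Re (poly c 0) > 0}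
           = count_N (Ra + image_mset refl_T Ra))
       \<and> (card {c :: complex poly. poly c 0 \<noteq> 0 \<and> same_modsq a c \<and>
                 poly c 0 \<in> \<real> \<and> Re (poly c 0) < 0}
           = count_N (Ra + image_mset refl_T Ra))"

proof -
  have anz: "a \<noteq> 0" and bnz: "b \<noteq> 0" using a0 b0 by auto
  have mi: "degree a = degree b \<and> QQ a = QQ b" using modsq_iff[OF a0 b0] hyp by simp
  have pa: "proots a + image_mset refl_T (proots a) = proots b + image_mset refl_T (proots b)"
    using proots_QQ[OF a0] proots_QQ[OF b0] mi by simp
  have ce: "count (proots a) x + count (proots a) (refl_T x) = count (proots b) x + count (proots b) (refl_T x)" for x
    using arg_cong[OF pa, of "\<lambda>M. count M x"] by (simp add: count_image_refl)
  have ce': "count (proots b) x + count (proots b) (refl_T x) = count (proots a) x + count (proots a) (refl_T x)" for x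
    using ce[of x] by simp
  have h1: "degree a = degree b" using mi by simp
  have h2: "Ra + image_mset refl_T Ra = Rb + image_mset refl_T Rb" using pa by (simp add: Ra_def Rb_def)
  have h3: "\<forall>z. norm z = 1 \<longrightarrow> count Ra z = count Rab z \<and> count Rb z = count Rab z"
  proof (intro allI impI)
    fix z :: complex assume "norm z = 1"
    hence "refl_T z = z" by (rule refl_T_circle)
    thus "count Ra z = count Rab z \<and> count Rb z = count Rab z"
      using ce[of z] by (simp add: Ra_def Rb_def Rab_def)
  qed
  have h4: "\<forall>z\<in>#Ra'. norm z \<noteq> 1"
  proof
    fix z assume z: "z \<in># Ra'"
    show "norm z \<noteq> 1"
    proof
      assume "norm z = 1"
      hence "refl_T z = z" by (rule refl_T_circle)
      thus False using ce[of z] z by (simp add: Ra'_def in_diff_count)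
    qed
  qed
  have h5: "\<forall>z\<in>#Rb'. norm z \<noteq> 1"
  proof
    fix z assume z: "z \<in># Rb'"
    show "norm z \<noteq> 1"
    proof
      assume "norm z = 1"
      hence "refl_T z = z" by (rule refl_T_circle)
      thus False using ce[of z] z by (simp add: Rb'_def in_diff_count)
    qed
  qed
  have h6: "\<forall>y\<in>#Ra'. y \<notin># Rb' \<and> refl_T y \<notin># Ra' \<and> count Rb' (refl_T y) = count Ra' y"
    using diff_facts[OF ce] by (simp add: Ra'_def Rb'_def)
  have icomm: "proots b \<inter># proots a = proots a \<inter># proots b" by (rule subset_mset.inf_commute)
  have h7: "\<forall>y\<in>#Rb'. y \<notin># Ra' \<and> refl_T y \<notin># Rb' \<and> count Ra' (refl_T y) = count Rb' y"
    using diff_facts[OF ce'] icomm by (simp add: Ra'_def Rb'_def)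
  have Rbimg: "Rb' = image_mset refl_T Ra'"
  proof (rule multiset_eqI)
    fix x
    show "count Rb' x = count (image_mset refl_T Ra') x"
      using ce[of x] by (auto simp: Ra'_def Rb'_def count_image_refl min_def)
  qed
  have h8: "size Ra' = size Rb'" using Rbimg by simp
  have h9: "prod_mset Ra' = prod_mset (image_mset refl_T Rb')" using Rbimg by simp
  define Ca where "Ca = lead_coeff a"
  define Cb where "Cb = lead_coeff b"
  define I where "I = proots a \<inter># proots b"
  define P where "P = prod_mset Ra'"
  have Ca0: "Ca \<noteq> 0" and Cb0: "Cb \<noteq> 0" using anz bnz by (auto simp: Ca_def Cb_def)
  have pa0: "poly a 0 = Ca * ((-1) ^ size (proots a) * prod_mset (proots a))"
  proof -
    have "poly a 0 = poly (smult (lead_coeff a) (PP (proots a))) 0" by (simp only: decomp)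
    also have "\<dots> = Ca * poly (PP (proots a)) 0" by (simp add: Ca_def)
    also have "poly (PP (proots a)) 0 = (-1) ^ size (proots a) * prod_mset (proots a)" by (rule poly_PP_0)
    finally show ?thesis .
  qed
  have pb0: "poly b 0 = Cb * ((-1) ^ size (proots b) * prod_mset (proots b))"
  proof -
    have "poly b 0 = poly (smult (lead_coeff b) (PP (proots b))) 0" by (simp only: decomp)
    also have "\<dots> = Cb * poly (PP (proots b)) 0" by (simp add: Cb_def)
    also have "poly (PP (proots b)) 0 = (-1) ^ size (proots b) * prod_mset (proots b)" by (rule poly_PP_0)
    finally show ?thesis .
  qed
  have sz: "size (proots a) = size (proots b)" using h1 by (simp add: size_proots_complex)
  have "lead_coeff (QQ a) = lead_coeff (QQ b)" using mi by simp
  hence "Ca * cnj (poly a 0) = Cb * cnj (poly b 0)" using lead_QQ[OF a0] lead_QQ[OF b0] Ca_def Cb_def by simp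
  hence "(-1) ^ size (proots a) * (Ca * cnj (Ca * prod_mset (proots a))) = (-1) ^ size (proots a) * (Cb * cnj (Cb * prod_mset (proots b)))"
    unfolding pa0 pb0 sz by (simp add: mult_ac)
  hence e0: "Ca * cnj (Ca * prod_mset (proots a)) = Cb * cnj (Cb * prod_mset (proots b))" by simp
  have e1: "cnj Ca * Ca * prod_mset (proots a) = cnj Cb * Cb * prod_mset (proots b)"
    using arg_cong[OF e0, of cnj] by (simp add: mult_ac)
  have spa: "proots a = Ra' + I"
    by (rule multiset_eqI) (simp add: Ra'_def I_def)
  have spb: "proots b = Rb' + I"
    by (rule multiset_eqI) (simp add: Rb'_def I_def)
  have "0 \<notin># proots a" by (rule zero_notin_proots[OF a0])
  hence I0: "0 \<notin># I" and R0: "0 \<notin># Ra'" using spa by auto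
  have pI: "prod_mset I \<noteq> 0" using I0 by (simp add: prod_mset_zero_iff)
  have P0: "P \<noteq> 0" using R0 by (simp add: prod_mset_zero_iff P_def)
  have "prod_mset Rb' = refl_T P" using Rbimg by (simp add: prod_image_refl P_def)
  hence pRb: "prod_mset Rb' = 1 / cnj P" by (simp add: refl_T_def)
  have "(cnj Ca * Ca * P) * prod_mset I = (cnj Cb * Cb * (1 / cnj P)) * prod_mset I"
    using e1 spa spb pRb by (simp add: P_def mult_ac)
  hence "prod_mset I = 0 \<or> cnj Ca * Ca * P = cnj Cb * Cb * (1 / cnj P)" by (simp only: mult_cancel_right)
  hence "cnj Ca * Ca * P = cnj Cb * Cb * (1 / cnj P)" using pI by blast
  hence "cnj Ca * Ca * (P * cnj P) = cnj Cb * Cb" using P0 by (simp add: field_simps)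
  hence "norm (cnj Ca * Ca * (P * cnj P)) = norm (cnj Cb * Cb)" by simp
  hence sq: "(norm Ca * norm P)^2 = (norm Cb)^2" by (simp add: norm_mult power2_eq_square mult_ac)
  have nb: "norm Cb = norm Ca * norm P" using power2_eq_imp_eq[OF sq[symmetric]] by simp
  define u where "u = Cb / (Ca * of_real (norm P))"
  have h10: "\<exists>u. norm u = 1 \<and> lead_coeff b = u * lead_coeff a * complex_of_real (norm (prod_mset Ra'))"
  proof (intro exI conjI)
    show "norm u = 1" using nb Ca0 P0 by (simp add: u_def norm_divide norm_mult)
    show "lead_coeff b = u * lead_coeff a * complex_of_real (norm (prod_mset Ra'))"
      using Ca0 P0 by (simp add: u_def Ca_def Cb_def P_def)
  qed
  have h11: "card {c :: complex poly. poly c 0 \<noteq> 0 \<and> same_modsq a c \<and>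
                 poly c 0 \<in> \<real> \<and> Re (poly c 0) > 0}
           = count_N (Ra + image_mset refl_T Ra)"
    using card_pos[OF a0] count_sols[OF zero_notin_proots[OF a0]] by (simp add: Ra_def)
  have h12: "card {c :: complex poly. poly c 0 \<noteq> 0 \<and> same_modsq a c \<and>
                 poly c 0 \<in> \<real> \<and> Re (poly c 0) < 0}
           = count_N (Ra + image_mset refl_T Ra)"
    using h11 card_neg by simp
  show ?thesis
    by (rule conjI[OF h1 conjI[OF h2 conjI[OF h3 conjI[OF h4 conjI[OF h5 conjI[OF h6
          conjI[OF h7 conjI[OF h8 conjI[OF h9 conjI[OF h10 conjI[OF h11 h12]]]]]]]]]]])
qed



end
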